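(* Let $k$ be a positive integer and let $w=A_1A_2\ldots A_n$ be a nonempty word over $\mathcal{A}_k$ (with $A_i\in\mathcal{A}_k$). Let $I_w:=A_1\oplus A_2\oplus\cdots\oplus A_n\in\mathcal{I}_k$. Then $[\![ I_w]\!]=A_1\boxplus A_2\boxplus\cdots\boxplus A_n$.
   Context: A $k$-interface graph is a tuple $(G,\phi,L,R)$ with $G$ a finite simple graph, $L,R\subseteq V(G)$, and $\phi:V(G)\to\{1,\dots,k\}$ injective on $L$ and on $R$. Two $k$-interface graphs $(G_1,\phi_1,L_1,R_1)$, $(G_2,\phi_2,L_2,R_2)$ are compatible if, with $J=\phi_1(R_1)\cap\phi_2(L_2)$, we have $V(G_1)\cap V(G_2)=\phi_1^{-1}(J)\cap R_1=\phi_2^{-1}(J)\cap L_2$ and $\phi_1,\phi_2$ agree on $V(G_1)\cap V(G_2)$ (no condition on edges). Their gluing is $(G_1\cup G_2,\phi,L_1,R_2)$ where $\phi$ extends $\phi_1$ and $\phi_2$ and $G_1\cup G_2=(V_1\cup V_2,E_1\cup E_2)$. Isomorphism of $k$-interface graphs is a graph isomorphism preserving labels $\phi$ and membership in $L$ and in $R$. $\mathcal{I}_k$ is the set of isomorphism classes; for $I_1,I_2\in\mathcal{I}_k$, $I_1\oplus I_2$ is the class of the gluing of compatible representatives of $I_1$ and $I_2$ (well defined), making $(\mathcal{I}_k,\oplus)$ a semigroup. The torso $\mathrm{torso}(G,X)$ is the graph on $X$ where distinct $x_1,x_2$ are adjacent iff $G$ has an $x_1$–$x_2$ path with no internal vertex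 in $X$. The abstraction $[\![\mathbb{G}]\!]$ of $\mathbb{G}=(G,\phi,L,R)$ is the isomorphism class of $(\mathrm{torso}(G,L\cup R),\phi|_{L\cup R},L,R)$; it depends only on the isomorphism class $I$ of $\mathbb{G}$, written $[\![ I]\!]$. $\mathcal{A}_k\subseteq\mathcal{I}_k$ is the set of all abstractions, and for $A_1,A_2\in\mathcal{A}_k$, $A_1\boxplus A_2:=[\![ A_1\oplus A_2]\!]$; $(\mathcal{A}_k,\boxplus)$ is a finite semigroup. *)

theory Defs
  imports Main
begin

text \<open>Vertices are taken from the countably infinite type nat,
  which suffices to represent every isomorphism class of finite graphs and to pick
  compatible representatives.\<close>

record 'v igraph =
  verts :: "'v set"
  edges :: "'v set set"
  lab   :: "'v \<Rightarrow> nat"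
  lft   :: "'v set"
  rgt   :: "'v set"

definition is_igraph :: "nat \<Rightarrow> 'v igraph \<Rightarrow> bool" where
  "is_igraph k G \<longleftrightarrow>
     finite (verts G) \<and>
     (\<forall>e\<in>edges G. \<exists>x y. x \<noteq> y \<and> e = {x, y} \<and> x \<in> verts G \<and> y \<in> verts G) \<and>
     lab G ` verts G \<subseteq> {1..k} \<and>
     lft G \<subseteq> verts G \<and> rgt G \<subseteq> verts G \<and>
     inj_on (lab G) (lft G) \<and> inj_on (lab G) (rgt G)"

definition iso_igraph :: "'v igraph \<Rightarrow> 'w igraph \<Rightarrow> bool" where
  "iso_igraph G H \<longleftrightarrow>
     (\<exists>f. bij_betw f (verts G) (verts H) \<and>
          (\<forall>x\<in>verts G. \<forall>y\<in>verts G. {x, y} \<in> edges G \<longleftrightarrow> {f x, f y} \<in> edges H) \<and>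
          (\<forall>x\<in>verts G. lab H (f x) = lab G x) \<and>
          f ` lft G = lft H \<and> f ` rgt G = rgt H)"

definition iclass :: "nat \<Rightarrow> nat igraph \<Rightarrow> nat igraph set" where
  "iclass k G = {H. is_igraph k H \<and> iso_igraph G H}"

definition Ik :: "nat \<Rightarrow> nat igraph set set" where
  "Ik k = {iclass k G | G. is_igraph k G}"

definition compatible :: "'v igraph \<Rightarrow> 'v igraph \<Rightarrow> bool" where
  "compatible G1 G2 \<longleftrightarrow>
     (let J = lab G1 ` rgt G1 \<inter> lab G2 ` lft G2 in
        verts G1 \<inter> verts G2 = {x\<in>rgt G1. lab G1 x \<in> J} \<and>
        verts G1 \<inter> verts G2 = {x\<in>lft G2. lab G2 x \<in> J} \<and>
        (\<forall>x\<in>verts G1 \<inter> verts G2. lab G1 x = lab G2 x))"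

definition glue :: "'v igraph \<Rightarrow> 'v igraph \<Rightarrow> 'v igraph" where
  "glue G1 G2 =
     \<lparr> verts = verts G1 \<union> verts G2,
       edges = edges G1 \<union> edges G2,
       lab = (\<lambda>x. if x \<in> verts G1 then lab G1 x else lab G2 x),
       lft = lft G1,
       rgt = rgt G2 \<rparr>"

text \<open>The semigroup operation on isomorphism classes (well defined per the paper).\<close>
definition oplus :: "nat \<Rightarrow> nat igraph set \<Rightarrow> nat igraph set \<Rightarrow> nat igraph set" where
  "oplus k I1 I2 =
     (THE I. \<exists>G1\<in>I1. \<exists>G2\<in>I2. compatible G1 G2 \<and> I = iclass k (glue G1 G2))"

definition is_path :: "'v igraph \<Rightarrow> 'v list \<Rightarrow> bool" where
  "is_path G ps \<longleftrightarrow> ps \<noteq> [] \<and> distinct ps \<and> set ps \<subseteq> verts G \<and>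
     (\<forall>i. Suc i < length ps \<longrightarrow> {ps ! i, ps ! Suc i} \<in> edges G)"

definition torso_edges :: "'v igraph \<Rightarrow> 'v set \<Rightarrow> 'v set set" where
  "torso_edges G X =
     {{x1, x2} | x1 x2. x1 \<in> X \<and> x2 \<in> X \<and> x1 \<noteq> x2 \<and>
        (\<exists>ps. is_path G ps \<and> hd ps = x1 \<and> last ps = x2 \<and>
              set (butlast (tl ps)) \<inter> X = {})}"

definition abstr_graph :: "'v igraph \<Rightarrow> 'v igraph" where
  "abstr_graph G =
     \<lparr> verts = lft G \<union> rgt G,
       edges = torso_edges G (lft G \<union> rgt G),
       lab = lab G,
       lft = lft G,
       rgt = rgt G \<rparr>"

text \<open>Abstraction of an isomorphism class (well defined per the paper).\<close>
definition abstr :: "nat \<Rightarrow> nat igraph set \<Rightarrow> nat igraph set" where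
  "abstr k I = (THE J. \<exists>G\<in>I. J = iclass k (abstr_graph G))"

definition Ak :: "nat \<Rightarrow> nat igraph set set" where
  "Ak k = abstr k ` Ik k"

definition boxplus :: "nat \<Rightarrow> nat igraph set \<Rightarrow> nat igraph set \<Rightarrow> nat igraph set" where
  "boxplus k A1 A2 = abstr k (oplus k A1 A2)"

end

theory Submission
  imports Defs
begin

inductive wk :: "'v igraph \<Rightarrow> 'v \<Rightarrow> 'v \<Rightarrow> 'v set \<Rightarrow> bool" for G where
  wk0: "a \<in> verts G \<Longrightarrow> wk G a a {a}"
| wkS: "{a, b} \<in> edges G \<Longrightarrow> a \<in> verts G \<Longrightarrow> wk G b c S \<Longrightarrow> wk G a c (insert a S)"

lemma wk_props: "wk G a c S \<Longrightarrow> a \<in> S \<and> c \<in> S \<and> S \<subseteq> verts G"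
  by (induction rule: wk.induct) auto

lemma wk_snoc: "wk G a b S \<Longrightarrow> {b, c} \<in> edges G \<Longrightarrow> c \<in> verts G \<Longrightarrow> wk G a c (insert c S)"
proof (induction rule: wk.induct)
  case (wk0 a)
  have "wk G a c (insert a {c})" by (rule wkS) (use wk0 in \<open>auto intro: wk.intros\<close>)
  then show ?case by (simp add: insert_commute)
next
  case (wkS a b c' S)
  then have "wk G a c (insert a (insert c S))" by (auto intro: wk.intros)
  then show ?case by (simp add: insert_commute)
qed

lemma wk_rev: "wk G a c S \<Longrightarrow> wk G c a S"
proof (induction rule: wk.induct)
  case (wk0 a) then show ?case by (rule wk.wk0)
next
  case (wkS a b c S)
  have "{b, a} \<in> edges G" using wkS by (simp add: insert_commute)
  from wk_snoc[OF wkS.IH this wkS.hyps(2)] show ?case .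
qed

lemma wk_app: "wk G a b S \<Longrightarrow> wk G b c T \<Longrightarrow> wk G a c (S \<union> T)"
proof (induction rule: wk.induct)
  case (wk0 a)
  then show ?case using wk_props[OF wk0(2)] by (simp add: insert_absorb)
next
  case (wkS a b c' S)
  then show ?case by (auto intro: wk.intros)
qed

lemma wk_mono: "wk G a c S \<Longrightarrow> verts G \<subseteq> verts H \<Longrightarrow> edges G \<subseteq> edges H \<Longrightarrow> wk H a c S"
  by (induction rule: wk.induct) (auto intro: wk.intros)

lemma is_path_tl: "is_path G (a # ps) \<Longrightarrow> ps \<noteq> [] \<Longrightarrow> is_path G ps"
  unfolding is_path_def
proof (intro conjI allI impI)
  fix i assume h: "a # ps \<noteq> [] \<and> distinct (a # ps) \<and> set (a # ps) \<subseteq> verts G \<and>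
    (\<forall>i. Suc i < length (a # ps) \<longrightarrow> {(a # ps) ! i, (a # ps) ! Suc i} \<in> edges G)"
    and i: "Suc i < length ps"
  then show "{ps ! i, ps ! Suc i} \<in> edges G"
    using spec[OF conjunct2[OF conjunct2[OF conjunct2[OF h]]], of "Suc i"] by simp
qed auto

lemma path_wk: "is_path G ps \<Longrightarrow> wk G (hd ps) (last ps) (set ps)"
proof (induction ps)
  case Nil then show ?case by (simp add: is_path_def)
next
  case (Cons a ps)
  show ?case
  proof (cases "ps = []")
    case True
    then show ?thesis using Cons.prems by (auto simp: is_path_def intro: wk.intros)
  next
    case False
    have p: "is_path G ps" using is_path_tl[OF Cons.prems False] .
    have e: "{a, hd ps} \<in> edges G" using Cons.prems False unfolding is_path_def
      by (cases ps) auto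
    have "a \<in> verts G" using Cons.prems by (simp add: is_path_def)
    from wkS[OF e this Cons.IH[OF p]] show ?thesis using False by simp
  qed
qed

lemma wk_path: "wk G a c S \<Longrightarrow> \<exists>ps. is_path G ps \<and> hd ps = a \<and> last ps = c \<and> set ps \<subseteq> S"
proof (induction rule: wk.induct)
  case (wk0 a)
  then show ?case by (intro exI[of _ "[a]"]) (simp add: is_path_def)
next
  case (wkS a b c S)
  then obtain ps where ps: "is_path G ps" "hd ps = b" "last ps = c" "set ps \<subseteq> S" by blast
  have ne: "ps \<noteq> []" using ps by (simp add: is_path_def)
  show ?case
  proof (cases "a \<in> set ps")
    case False
    have "is_path G (a # ps)" unfolding is_path_def
    proof (intro conjI allI impI)
      show "distinct (a # ps)" using False ps by (simp add: is_path_def)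
      show "set (a # ps) \<subseteq> verts G" using ps wkS by (auto simp: is_path_def)
      fix i assume "Suc i < length (a # ps)"
      then show "{(a # ps) ! i, (a # ps) ! Suc i} \<in> edges G"
        using ps wkS ne by (cases i) (auto simp: is_path_def hd_conv_nth)
    qed simp
    then show ?thesis using ps ne by (intro exI[of _ "a # ps"]) auto
  next
    case True
    then obtain i where i: "i < length ps" "ps ! i = a" by (auto simp: in_set_conv_nth)
    have "is_path G (drop i ps)" unfolding is_path_def
    proof (intro conjI allI impI)
      show "drop i ps \<noteq> []" using i by simp
      show "distinct (drop i ps)" using ps by (simp add: is_path_def)
      show "set (drop i ps) \<subseteq> verts G" using ps set_drop_subset by (fastforce simp: is_path_def)
      fix j assume "Suc j < length (drop i ps)"
      then show "{drop i ps ! j, drop i ps ! Suc j} \<in> edges G"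
        using ps(1) unfolding is_path_def by (auto dest: spec[of _ "i + j"])
    qed
    moreover have "hd (drop i ps) = a" using i by (simp add: hd_drop_conv_nth)
    moreover have "last (drop i ps) = c" using i ps by simp
    moreover have "set (drop i ps) \<subseteq> insert a S" using ps set_drop_subset by fastforce
    ultimately show ?thesis by blast
  qed
qed

lemma distinct_inner: "distinct ps \<Longrightarrow> z \<in> set (butlast (tl ps)) \<Longrightarrow> z \<noteq> hd ps \<and> z \<noteq> last ps"
proof (cases ps)
  case Nil
  assume "z \<in> set (butlast (tl ps))" then show ?thesis using Nil by simp
next
  case (Cons a rest)
  assume d: "distinct ps" and z: "z \<in> set (butlast (tl ps))"
  have rne: "rest \<noteq> []" using z Cons by auto
  have "rest = butlast rest @ [last rest]" using rne by simp
  then have "last rest \<notin> set (butlast rest)" using d Cons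
    by (metis distinct_append distinct.simps(2) not_distinct_conv_prefix)
  moreover have "a \<notin> set rest" using d Cons by simp
  ultimately show ?thesis using z Cons rne by (auto dest: in_set_butlastD)
qed

lemma path_set_split: "ps \<noteq> [] \<Longrightarrow> hd ps \<noteq> last ps \<Longrightarrow>
   set ps = insert (hd ps) (insert (last ps) (set (butlast (tl ps))))"
proof (cases ps)
  case (Cons a rest)
  assume "hd ps \<noteq> last ps"
  then have "rest \<noteq> []" using Cons by auto
  then have "set rest = insert (last rest) (set (butlast rest))"
    by (metis append_butlast_last_id insert_is_Un list.set(2) set_append sup_commute list.set(1))
  then show ?thesis using Cons \<open>rest \<noteq> []\<close> by auto
qed simp

lemma torso_iff:
  "{x, y} \<in> torso_edges G X \<longleftrightarrow>
     x \<in> X \<and> y \<in> X \<and> x \<noteq> y \<and> (\<exists>S. wk G x y S \<and> S \<inter> X \<subseteq> {x, y})"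
proof
  assume "{x, y} \<in> torso_edges G X"
  then obtain x1 x2 ps where e: "{x, y} = {x1, x2}" "x1 \<in> X" "x2 \<in> X" "x1 \<noteq> x2"
    "is_path G ps" "hd ps = x1" "last ps = x2" "set (butlast (tl ps)) \<inter> X = {}"
    unfolding torso_edges_def by blast
  have w: "wk G x1 x2 (set ps)" using path_wk[OF e(5)] e by simp
  have ne: "ps \<noteq> []" using e(5) by (simp add: is_path_def)
  have s: "set ps \<inter> X \<subseteq> {x1, x2}" using path_set_split[OF ne] e by auto
  show "x \<in> X \<and> y \<in> X \<and> x \<noteq> y \<and> (\<exists>S. wk G x y S \<and> S \<inter> X \<subseteq> {x, y})"
  proof (cases "x = x1")
    case True
    then have "y = x2" using e(1) e(4) by (auto simp: doubleton_eq_iff)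
    then show ?thesis using True e w s by auto
  next
    case False
    then have "x = x2" "y = x1" using e(1) by (auto simp: doubleton_eq_iff)
    then show ?thesis using e w s wk_rev[OF w] by (auto simp: insert_commute)
  qed
next
  assume h: "x \<in> X \<and> y \<in> X \<and> x \<noteq> y \<and> (\<exists>S. wk G x y S \<and> S \<inter> X \<subseteq> {x, y})"
  then obtain S where S: "wk G x y S" "S \<inter> X \<subseteq> {x, y}" by blast
  obtain ps where ps: "is_path G ps" "hd ps = x" "last ps = y" "set ps \<subseteq> S"
    using wk_path[OF S(1)] by blast
  have "set (butlast (tl ps)) \<inter> X = {}"
  proof (rule ccontr)
    assume "set (butlast (tl ps)) \<inter> X \<noteq> {}"
    then obtain z where z: "z \<in> set (butlast (tl ps))" "z \<in> X" by blast
    have "z \<in> set ps" using z(1) by (cases ps) (auto dest: in_set_butlastD)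
    then have "z \<in> {x, y}" using ps S z by auto
    moreover have "z \<noteq> x \<and> z \<noteq> y" using distinct_inner[OF _ z(1)] ps by (simp add: is_path_def)
    ultimately show False by auto
  qed
  then show "{x, y} \<in> torso_edges G X" unfolding torso_edges_def using h ps by blast
qed

definition isov :: "('v \<Rightarrow> 'w) \<Rightarrow> 'v igraph \<Rightarrow> 'w igraph \<Rightarrow> bool" where
  "isov f G H \<longleftrightarrow> bij_betw f (verts G) (verts H) \<and>
          (\<forall>x\<in>verts G. \<forall>y\<in>verts G. {x, y} \<in> edges G \<longleftrightarrow> {f x, f y} \<in> edges H) \<and>
          (\<forall>x\<in>verts G. lab H (f x) = lab G x) \<and>
          f ` lft G = lft H \<and> f ` rgt G = rgt H"

lemma iso_isov: "iso_igraph G H \<longleftrightarrow> (\<exists>f. isov f G H)"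
  unfolding iso_igraph_def isov_def ..

lemma edge_form: "is_igraph k G \<Longrightarrow> e \<in> edges G \<Longrightarrow> \<exists>x y. x \<noteq> y \<and> e = {x, y} \<and> x \<in> verts G \<and> y \<in> verts G"
  unfolding is_igraph_def by blast

lemma edge_verts: assumes "is_igraph k G" "{a, b} \<in> edges G" shows "a \<in> verts G \<and> b \<in> verts G \<and> a \<noteq> b"
proof -
  obtain x y where xy: "x \<noteq> y" "{a, b} = {x, y}" "x \<in> verts G" "y \<in> verts G"
    using edge_form[OF assms] by blast
  have "a \<in> {x, y}" "b \<in> {x, y}" using xy(2) by (metis insertI1, metis insertI1 insert_commute)
  moreover have "a \<noteq> b" using xy(1,2) by (metis doubleton_eq_iff)
  ultimately show ?thesis using xy by blast
qed

lemma isov_refl: "isov id G G"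
  unfolding isov_def by auto

lemma isov_inv: assumes "is_igraph k G" "isov f G H" shows "isov (inv_into (verts G) f) H G"
proof -
  let ?g = "inv_into (verts G) f"
  have b: "bij_betw f (verts G) (verts H)" using assms(2) by (simp add: isov_def)
  have bg: "bij_betw ?g (verts H) (verts G)" using bij_betw_inv_into[OF b] .
  have fg: "\<And>x. x \<in> verts H \<Longrightarrow> f (?g x) = x" using bij_betw_inv_into_right[OF b] by blast
  have gv: "\<And>x. x \<in> verts H \<Longrightarrow> ?g x \<in> verts G" using bg bij_betwE by blast
  have inj: "inj_on f (verts G)" using b bij_betw_def by blast
  have sub: "lft G \<subseteq> verts G" "rgt G \<subseteq> verts G" using assms(1) by (auto simp: is_igraph_def)
  show ?thesis unfolding isov_def
  proof (intro conjI ballI)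
    show "bij_betw ?g (verts H) (verts G)" by (rule bg)
  next
    fix x y assume xy: "x \<in> verts H" "y \<in> verts H"
    have e: "\<forall>x\<in>verts G. \<forall>y\<in>verts G. {x, y} \<in> edges G \<longleftrightarrow> {f x, f y} \<in> edges H"
      using assms(2) unfolding isov_def by blast
    have "({?g x, ?g y} \<in> edges G) = ({f (?g x), f (?g y)} \<in> edges H)"
      using e gv[OF xy(1)] gv[OF xy(2)] by blast
    then show "({x, y} \<in> edges H) = ({?g x, ?g y} \<in> edges G)" using fg xy by simp
  next
    fix x assume x: "x \<in> verts H"
    have "lab H (f (?g x)) = lab G (?g x)" using assms(2) gv[OF x] unfolding isov_def by blast
    then show "lab G (?g x) = lab H x" using fg[OF x] by simp
  next
    show "?g ` lft H = lft G" using assms(2) sub inj inv_into_image_cancel unfolding isov_def by metis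
    show "?g ` rgt H = rgt G" using assms(2) sub inj inv_into_image_cancel unfolding isov_def by metis
  qed
qed

lemma isov_trans: assumes "isov f G H" "isov g H K" shows "isov (g \<circ> f) G K"
proof -
  have b1: "bij_betw f (verts G) (verts H)" using assms(1) unfolding isov_def by blast
  have b2: "bij_betw g (verts H) (verts K)" using assms(2) unfolding isov_def by blast
  have fv: "\<And>x. x \<in> verts G \<Longrightarrow> f x \<in> verts H" using b1 bij_betwE by blast
  have e1: "\<forall>x\<in>verts G. \<forall>y\<in>verts G. {x, y} \<in> edges G \<longleftrightarrow> {f x, f y} \<in> edges H"
    using assms(1) unfolding isov_def by blast
  have e2: "\<forall>x\<in>verts H. \<forall>y\<in>verts H. {x, y} \<in> edges H \<longleftrightarrow> {g x, g y} \<in> edges K"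
    using assms(2) unfolding isov_def by blast
  have l1: "\<forall>x\<in>verts G. lab H (f x) = lab G x" using assms(1) unfolding isov_def by blast
  have l2: "\<forall>x\<in>verts H. lab K (g x) = lab H x" using assms(2) unfolding isov_def by blast
  have r1: "f ` lft G = lft H" "f ` rgt G = rgt H" using assms(1) unfolding isov_def by blast+
  have r2: "g ` lft H = lft K" "g ` rgt H = rgt K" using assms(2) unfolding isov_def by blast+
  show ?thesis unfolding isov_def
  proof (intro conjI ballI)
    show "bij_betw (g \<circ> f) (verts G) (verts K)" using bij_betw_trans[OF b1 b2] .
  next
    fix x y assume xy: "x \<in> verts G" "y \<in> verts G"
    have "({x, y} \<in> edges G) = ({f x, f y} \<in> edges H)" using e1 xy by blast
    also have "\<dots> = ({g (f x), g (f y)} \<in> edges K)" using e2 fv xy by blast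
    finally show "({x, y} \<in> edges G) = ({(g \<circ> f) x, (g \<circ> f) y} \<in> edges K)" by simp
  next
    fix x assume x: "x \<in> verts G"
    show "lab K ((g \<circ> f) x) = lab G x" using l1 l2 fv[OF x] x by simp
  next
    show "(g \<circ> f) ` lft G = lft K" "(g \<circ> f) ` rgt G = rgt K"
      by (simp_all only: image_comp[symmetric] r1 r2)
  qed
qed

lemma iso_sym: "is_igraph k G \<Longrightarrow> iso_igraph G H \<Longrightarrow> iso_igraph H G"
  unfolding iso_isov using isov_inv by blast

lemma iso_trans: "iso_igraph G H \<Longrightarrow> iso_igraph H K \<Longrightarrow> iso_igraph G K"
  unfolding iso_isov using isov_trans by blast

lemma iso_refl: "iso_igraph G G"
  unfolding iso_isov using isov_refl by blast

lemma iclass_eq: assumes "is_igraph k G" "iso_igraph G H" shows "iclass k G = iclass k H"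
proof -
  have "iso_igraph H G" using iso_sym[OF assms] .
  have "iso_igraph G K \<longleftrightarrow> iso_igraph H K" for K
    using iso_trans[OF \<open>iso_igraph H G\<close>, of K] iso_trans[OF assms(2), of K] by blast
  then show ?thesis unfolding iclass_def by blast
qed

lemma iclass_self: "is_igraph k G \<Longrightarrow> G \<in> iclass k G"
  unfolding iclass_def using iso_refl by blast

lemma iclass_mem: "H \<in> iclass k G \<Longrightarrow> is_igraph k H \<and> iso_igraph G H"
  unfolding iclass_def by blast

lemma isov_wk: assumes "isov f G H" shows "wk G a c S \<Longrightarrow> wk H (f a) (f c) (f ` S)"
proof (induction rule: wk.induct)
  have b: "bij_betw f (verts G) (verts H)" using assms unfolding isov_def by blast
  case (wk0 a)
  then have "f a \<in> verts H" using b bij_betwE by blast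
  then show ?case by (simp add: wk.wk0)
next
  have b: "bij_betw f (verts G) (verts H)" using assms unfolding isov_def by blast
  have e: "\<forall>x\<in>verts G. \<forall>y\<in>verts G. {x, y} \<in> edges G \<longleftrightarrow> {f x, f y} \<in> edges H"
    using assms unfolding isov_def by blast
  case (wkS a b' c S)
  have "b' \<in> verts G" using wk_props[OF wkS.hyps(3)] by blast
  then have "{f a, f b'} \<in> edges H" using e wkS.hyps by blast
  moreover have "f a \<in> verts H" using b wkS.hyps bij_betwE by blast
  ultimately have "wk H (f a) (f c) (insert (f a) (f ` S))" using wkS.IH by (rule wk.wkS)
  then show ?case by simp
qed

lemma isov_torso: assumes "isov f G H" "X \<subseteq> verts G" "{x, y} \<in> torso_edges G X"
  shows "{f x, f y} \<in> torso_edges H (f ` X)"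
proof -
  have t: "x \<in> X \<and> y \<in> X \<and> x \<noteq> y \<and> (\<exists>S. wk G x y S \<and> S \<inter> X \<subseteq> {x, y})"
    using assms(3) unfolding torso_iff .
  then obtain S where S: "x \<in> X" "y \<in> X" "x \<noteq> y" "wk G x y S" "S \<inter> X \<subseteq> {x, y}"
    by blast
  have inj: "inj_on f (verts G)" using assms(1) unfolding isov_def bij_betw_def by blast
  have Sv: "S \<subseteq> verts G" using wk_props[OF S(4)] by blast
  have "f ` S \<inter> f ` X = f ` (S \<inter> X)" using inj_on_image_Int[OF inj Sv assms(2)] by simp
  also have "\<dots> \<subseteq> {f x, f y}" using S(5) by auto
  finally have "f ` S \<inter> f ` X \<subseteq> {f x, f y}" .
  moreover have "f x \<noteq> f y" using S assms(2) inj by (meson inj_on_contraD subsetD)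
  moreover have "f x \<in> f ` X" "f y \<in> f ` X" using S by auto
  ultimately show ?thesis unfolding torso_iff using isov_wk[OF assms(1) S(4)] by blast
qed

lemma is_igraph_abstr: assumes "is_igraph k G" shows "is_igraph k (abstr_graph G)"
proof -
  have e: "\<forall>e\<in>torso_edges G (lft G \<union> rgt G). \<exists>x y. x \<noteq> y \<and> e = {x, y} \<and> x \<in> lft G \<union> rgt G \<and> y \<in> lft G \<union> rgt G"
    unfolding torso_edges_def by blast
  have s: "lft G \<union> rgt G \<subseteq> verts G" "finite (verts G)" "lab G ` verts G \<subseteq> {1..k}"
    "inj_on (lab G) (lft G)" "inj_on (lab G) (rgt G)"
    using assms unfolding is_igraph_def by blast+
  have "finite (lft G \<union> rgt G)" using s finite_subset by blast
  moreover have "lab G ` (lft G \<union> rgt G) \<subseteq> {1..k}" using s by blast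
  ultimately show ?thesis using e s unfolding is_igraph_def abstr_graph_def by simp
qed

lemma iso_abstr: assumes "is_igraph k G" "isov f G H" shows "isov f (abstr_graph G) (abstr_graph H)"
proof -
  let ?X = "lft G \<union> rgt G"
  have sub: "?X \<subseteq> verts G" using assms(1) unfolding is_igraph_def by blast
  have b: "bij_betw f (verts G) (verts H)" using assms(2) unfolding isov_def by blast
  have inj: "inj_on f (verts G)" using bij_betw_imp_inj_on[OF b] .
  have lr: "f ` lft G = lft H" "f ` rgt G = rgt H" using assms(2) unfolding isov_def by blast+
  have fX: "f ` ?X = lft H \<union> rgt H" using lr by (simp add: image_Un)
  have lb: "\<forall>x\<in>verts G. lab H (f x) = lab G x" using assms(2) unfolding isov_def by blast
  let ?g = "inv_into (verts G) f"
  have ig: "isov ?g H G" using isov_inv[OF assms] .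
  have gf: "\<And>x. x \<in> verts G \<Longrightarrow> ?g (f x) = x" by (rule inv_into_f_f[OF inj])
  have subH: "f ` ?X \<subseteq> verts H"
  proof -
    have "f ` ?X \<subseteq> f ` verts G" by (rule image_mono[OF sub])
    then show ?thesis unfolding bij_betw_imp_surj_on[OF b] .
  qed
  have gX: "?g ` f ` ?X = ?X" using inv_into_image_cancel[OF inj sub] .
  have va: "verts (abstr_graph G) = ?X" "verts (abstr_graph H) = lft H \<union> rgt H"
    "edges (abstr_graph G) = torso_edges G ?X" "edges (abstr_graph H) = torso_edges H (lft H \<union> rgt H)"
    "lab (abstr_graph G) = lab G" "lab (abstr_graph H) = lab H"
    "lft (abstr_graph G) = lft G" "lft (abstr_graph H) = lft H"
    "rgt (abstr_graph G) = rgt G" "rgt (abstr_graph H) = rgt H"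
    by (simp_all add: abstr_graph_def)
  show ?thesis unfolding isov_def va
  proof (intro conjI ballI)
    show "bij_betw f ?X (lft H \<union> rgt H)"
      unfolding bij_betw_def using fX inj_on_subset[OF inj sub] by blast
  next
    fix x y assume xy: "x \<in> ?X" "y \<in> ?X"
    then have xy': "x \<in> verts G" "y \<in> verts G" using sub by blast+
    show "({x, y} \<in> torso_edges G ?X) = ({f x, f y} \<in> torso_edges H (lft H \<union> rgt H))"
    proof
      assume "{x, y} \<in> torso_edges G ?X"
      from isov_torso[OF assms(2) sub this] show "{f x, f y} \<in> torso_edges H (lft H \<union> rgt H)"
        unfolding fX .
    next
      assume "{f x, f y} \<in> torso_edges H (lft H \<union> rgt H)"
      then have "{f x, f y} \<in> torso_edges H (f ` ?X)" unfolding fX .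
      from isov_torso[OF ig subH this] show "{x, y} \<in> torso_edges G ?X"
        unfolding gX gf[OF xy'(1)] gf[OF xy'(2)] .
    qed
  next
    fix x assume "x \<in> ?X"
    then show "lab H (f x) = lab G x" using lb sub by blast
  qed (rule lr(1), rule lr(2))
qed

lemma abstr_iclass: assumes "is_igraph k G" shows "abstr k (iclass k G) = iclass k (abstr_graph G)"
  unfolding abstr_def
proof (rule the_equality)
  show "\<exists>H\<in>iclass k G. iclass k (abstr_graph G) = iclass k (abstr_graph H)"
    using iclass_self[OF assms] by blast
next
  fix J assume "\<exists>H\<in>iclass k G. J = iclass k (abstr_graph H)"
  then obtain H where H: "H \<in> iclass k G" "J = iclass k (abstr_graph H)" by blast
  obtain f where "isov f G H" using iclass_mem[OF H(1)] iso_isov by blast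
  then have "iso_igraph (abstr_graph G) (abstr_graph H)" using iso_abstr[OF assms] iso_isov by blast
  then show "J = iclass k (abstr_graph G)" using H iclass_eq is_igraph_abstr assms by metis
qed

lemma glue_sel[simp]:
  "verts (glue G1 G2) = verts G1 \<union> verts G2"
  "edges (glue G1 G2) = edges G1 \<union> edges G2"
  "lab (glue G1 G2) = (\<lambda>x. if x \<in> verts G1 then lab G1 x else lab G2 x)"
  "lft (glue G1 G2) = lft G1"
  "rgt (glue G1 G2) = rgt G2"
  by (simp_all add: glue_def)

lemma compatD:
  assumes "compatible G1 G2"
  shows "verts G1 \<inter> verts G2 = {x\<in>rgt G1. lab G1 x \<in> lab G1 ` rgt G1 \<inter> lab G2 ` lft G2}"
    "verts G1 \<inter> verts G2 = {x\<in>lft G2. lab G2 x \<in> lab G1 ` rgt G1 \<inter> lab G2 ` lft G2}"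
    "\<And>x. x \<in> verts G1 \<Longrightarrow> x \<in> verts G2 \<Longrightarrow> lab G1 x = lab G2 x"
  using assms unfolding compatible_def Let_def by blast+

lemma igD:
  assumes "is_igraph k G"
  shows "finite (verts G)" "lab G ` verts G \<subseteq> {1..k}" "lft G \<subseteq> verts G" "rgt G \<subseteq> verts G"
    "inj_on (lab G) (lft G)" "inj_on (lab G) (rgt G)"
  using assms unfolding is_igraph_def by blast+

lemma compat_sub: assumes "compatible G1 G2" shows "verts G1 \<inter> verts G2 \<subseteq> rgt G1"
  using compatD(1)[OF assms] by blast

lemma is_igraph_glue:
  assumes g1: "is_igraph k G1" and g2: "is_igraph k G2" and c: "compatible G1 G2"
  shows "is_igraph k (glue G1 G2)"
proof -
  have fin: "finite (verts G1 \<union> verts G2)" using igD(1)[OF g1] igD(1)[OF g2] by blast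
  have e: "\<forall>e\<in>edges G1 \<union> edges G2. \<exists>x y. x \<noteq> y \<and> e = {x, y} \<and> x \<in> verts G1 \<union> verts G2 \<and> y \<in> verts G1 \<union> verts G2"
  proof
    fix e assume "e \<in> edges G1 \<union> edges G2"
    then show "\<exists>x y. x \<noteq> y \<and> e = {x, y} \<and> x \<in> verts G1 \<union> verts G2 \<and> y \<in> verts G1 \<union> verts G2"
    proof
      assume "e \<in> edges G1"
      from edge_form[OF g1 this] show ?thesis by blast
    next
      assume "e \<in> edges G2"
      from edge_form[OF g2 this] show ?thesis by blast
    qed
  qed
  let ?l = "\<lambda>x. if x \<in> verts G1 then lab G1 x else lab G2 x"
  have l: "?l ` (verts G1 \<union> verts G2) \<subseteq> {1..k}"
  proof
    fix z assume "z \<in> ?l ` (verts G1 \<union> verts G2)"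
    then obtain x where x: "x \<in> verts G1 \<union> verts G2" "z = ?l x" by blast
    show "z \<in> {1..k}"
    proof (cases "x \<in> verts G1")
      case True then show ?thesis using x igD(2)[OF g1] by auto
    next
      case False then show ?thesis using x igD(2)[OF g2] by auto
    qed
  qed
  have i1: "inj_on ?l (lft G1)"
  proof -
    have "inj_on (lab G1) (lft G1)" by (rule igD(5)[OF g1])
    moreover have "inj_on ?l (lft G1) = inj_on (lab G1) (lft G1)"
      by (rule inj_on_cong) (use igD(3)[OF g1] in auto)
    ultimately show ?thesis by simp
  qed
  have i2: "inj_on ?l (rgt G2)"
  proof -
    have "inj_on (lab G2) (rgt G2)" by (rule igD(6)[OF g2])
    moreover have "inj_on ?l (rgt G2) = inj_on (lab G2) (rgt G2)"
      by (rule inj_on_cong) (use igD(4)[OF g2] compatD(3)[OF c] in auto)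
    ultimately show ?thesis by simp
  qed
  have "lft G1 \<subseteq> verts G1 \<union> verts G2" "rgt G2 \<subseteq> verts G1 \<union> verts G2"
    using igD(3)[OF g1] igD(4)[OF g2] by blast+
  then show ?thesis unfolding is_igraph_def glue_sel using fin e l i1 i2 by blast
qed

lemma glue_iso:
  assumes g1: "is_igraph k G1" and g2: "is_igraph k G2" and h1: "is_igraph k H1" and h2: "is_igraph k H2"
    and c: "compatible G1 G2" and cH: "compatible H1 H2"
    and f1: "isov f1 G1 H1" and f2: "isov f2 G2 H2"
  shows "isov (\<lambda>x. if x \<in> verts G1 then f1 x else f2 x) (glue G1 G2) (glue H1 H2)"
proof -
  define h where "h = (\<lambda>x. if x \<in> verts G1 then f1 x else f2 x)"
  have b1: "bij_betw f1 (verts G1) (verts H1)" using f1 unfolding isov_def by blast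
  have b2: "bij_betw f2 (verts G2) (verts H2)" using f2 unfolding isov_def by blast
  have inj1: "inj_on f1 (verts G1)" using bij_betw_imp_inj_on[OF b1] .
  have inj2: "inj_on f2 (verts G2)" using bij_betw_imp_inj_on[OF b2] .
  have im1: "f1 ` verts G1 = verts H1" using bij_betw_imp_surj_on[OF b1] .
  have im2: "f2 ` verts G2 = verts H2" using bij_betw_imp_surj_on[OF b2] .
  have fv1: "\<And>x. x \<in> verts G1 \<Longrightarrow> f1 x \<in> verts H1" using im1 by blast
  have fv2: "\<And>x. x \<in> verts G2 \<Longrightarrow> f2 x \<in> verts H2" using im2 by blast
  have e1: "\<And>x y. x \<in> verts G1 \<Longrightarrow> y \<in> verts G1 \<Longrightarrow> {x, y} \<in> edges G1 \<longleftrightarrow> {f1 x, f1 y} \<in> edges H1"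
    using f1 unfolding isov_def by blast
  have e2: "\<And>x y. x \<in> verts G2 \<Longrightarrow> y \<in> verts G2 \<Longrightarrow> {x, y} \<in> edges G2 \<longleftrightarrow> {f2 x, f2 y} \<in> edges H2"
    using f2 unfolding isov_def by blast
  have l1: "\<And>x. x \<in> verts G1 \<Longrightarrow> lab H1 (f1 x) = lab G1 x" using f1 unfolding isov_def by blast
  have l2: "\<And>x. x \<in> verts G2 \<Longrightarrow> lab H2 (f2 x) = lab G2 x" using f2 unfolding isov_def by blast
  have lr1: "f1 ` lft G1 = lft H1" "f1 ` rgt G1 = rgt H1" using f1 unfolding isov_def by blast+
  have lr2: "f2 ` lft G2 = lft H2" "f2 ` rgt G2 = rgt H2" using f2 unfolding isov_def by blast+
  have R1: "lab H1 ` rgt H1 = lab G1 ` rgt G1"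
  proof -
    have "lab H1 ` rgt H1 = (\<lambda>x. lab H1 (f1 x)) ` rgt G1" unfolding lr1(2)[symmetric] image_image ..
    also have "\<dots> = lab G1 ` rgt G1" using l1 igD(4)[OF g1] by (intro image_cong) auto
    finally show ?thesis .
  qed
  have L2: "lab H2 ` lft H2 = lab G2 ` lft G2"
  proof -
    have "lab H2 ` lft H2 = (\<lambda>x. lab H2 (f2 x)) ` lft G2" unfolding lr2(1)[symmetric] image_image ..
    also have "\<dots> = lab G2 ` lft G2" using l2 igD(3)[OF g2] by (intro image_cong) auto
    finally show ?thesis .
  qed
  define J where "J = lab G1 ` rgt G1 \<inter> lab G2 ` lft G2"
  have JH: "lab H1 ` rgt H1 \<inter> lab H2 ` lft H2 = J" unfolding J_def R1 L2 ..
  have cG1: "verts G1 \<inter> verts G2 = {x\<in>rgt G1. lab G1 x \<in> J}" using compatD(1)[OF c] unfolding J_def .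
  have cG2: "verts G1 \<inter> verts G2 = {x\<in>lft G2. lab G2 x \<in> J}" using compatD(2)[OF c] unfolding J_def .
  have cH1: "verts H1 \<inter> verts H2 = {x\<in>rgt H1. lab H1 x \<in> J}" using compatD(1)[OF cH] unfolding JH .
  have cH2: "verts H1 \<inter> verts H2 = {x\<in>lft H2. lab H2 x \<in> J}" using compatD(2)[OF cH] unfolding JH .
  have a: "x \<in> verts G1 \<longleftrightarrow> f2 x \<in> verts H1" if x: "x \<in> verts G2" for x
  proof -
    have "x \<in> verts G1 \<longleftrightarrow> x \<in> verts G1 \<inter> verts G2" using x by blast
    also have "\<dots> \<longleftrightarrow> x \<in> lft G2 \<and> lab G2 x \<in> J" unfolding cG2 by blast
    also have "\<dots> \<longleftrightarrow> f2 x \<in> lft H2 \<and> lab H2 (f2 x) \<in> J"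
      unfolding lr2(1)[symmetric] l2[OF x] using inj_on_image_mem_iff[OF inj2 x igD(3)[OF g2]] by simp
    also have "\<dots> \<longleftrightarrow> f2 x \<in> verts H1 \<inter> verts H2" unfolding cH2 by blast
    also have "\<dots> \<longleftrightarrow> f2 x \<in> verts H1" using fv2[OF x] by blast
    finally show ?thesis .
  qed
  have a2: "x \<in> verts G2 \<longleftrightarrow> f1 x \<in> verts H2" if x: "x \<in> verts G1" for x
  proof -
    have "x \<in> verts G2 \<longleftrightarrow> x \<in> verts G1 \<inter> verts G2" using x by blast
    also have "\<dots> \<longleftrightarrow> x \<in> rgt G1 \<and> lab G1 x \<in> J" unfolding cG1 by blast
    also have "\<dots> \<longleftrightarrow> f1 x \<in> rgt H1 \<and> lab H1 (f1 x) \<in> J"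
      unfolding lr1(2)[symmetric] l1[OF x] using inj_on_image_mem_iff[OF inj1 x igD(4)[OF g1]] by simp
    also have "\<dots> \<longleftrightarrow> f1 x \<in> verts H1 \<inter> verts H2" unfolding cH1 by blast
    also have "\<dots> \<longleftrightarrow> f1 x \<in> verts H2" using fv1[OF x] by blast
    finally show ?thesis .
  qed
  have a3: "f1 x = f2 x" if x: "x \<in> verts G1" "x \<in> verts G2" for x
  proof -
    have "x \<in> rgt G1" using cG1 x by blast
    then have r1: "f1 x \<in> rgt H1" using lr1(2) by blast
    have "f2 x \<in> verts H1 \<inter> verts H2" using a[OF x(2)] x fv2 by blast
    then have r2: "f2 x \<in> rgt H1" using cH1 by blast
    have "lab H1 (f1 x) = lab G1 x" using l1[OF x(1)] .
    also have "\<dots> = lab G2 x" using compatD(3)[OF c x] .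
    also have "\<dots> = lab H2 (f2 x)" using l2[OF x(2)] by simp
    also have "\<dots> = lab H1 (f2 x)" using compatD(3)[OF cH] \<open>f2 x \<in> verts H1 \<inter> verts H2\<close> by simp
    finally show ?thesis using inj_onD[OF igD(6)[OF h1] _ r1 r2] by blast
  qed
  have hV1: "\<And>x. x \<in> verts G1 \<Longrightarrow> h x = f1 x" unfolding h_def by simp
  have hV2: "\<And>x. x \<in> verts G2 \<Longrightarrow> h x = f2 x" unfolding h_def using a3 by simp
  have hin1: "h x \<in> verts H1 \<longleftrightarrow> x \<in> verts G1" if x: "x \<in> verts G1 \<union> verts G2" for x
  proof (cases "x \<in> verts G1")
    case True then show ?thesis using hV1 fv1 by simp
  next
    case False then have "x \<in> verts G2" using x by blast
    then show ?thesis using False hV2 a by simp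
  qed
  have hin2: "h x \<in> verts H2 \<longleftrightarrow> x \<in> verts G2" if x: "x \<in> verts G1 \<union> verts G2" for x
  proof (cases "x \<in> verts G2")
    case True then show ?thesis using hV2 fv2 by simp
  next
    case False then have "x \<in> verts G1" using x by blast
    then show ?thesis using False hV1 a2 by simp
  qed
  have hin: "h x \<in> verts H1 \<union> verts H2" if x: "x \<in> verts G1 \<union> verts G2" for x
    using hin1[OF x] hin2[OF x] x by blast
  have inj: "inj_on h (verts G1 \<union> verts G2)"
  proof (rule inj_onI)
    fix x y assume x: "x \<in> verts G1 \<union> verts G2" and y: "y \<in> verts G1 \<union> verts G2" and e: "h x = h y"
    show "x = y"
    proof (cases "x \<in> verts G1")
      case True
      then have "y \<in> verts G1" using hin1[OF x] hin1[OF y] e by simp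
      then show ?thesis using True e hV1 inj_onD[OF inj1] by metis
    next
      case False
      then have "y \<notin> verts G1" using hin1[OF x] hin1[OF y] e by simp
      then have "x \<in> verts G2" "y \<in> verts G2" using False x y by blast+
      then show ?thesis using e hV2 inj_onD[OF inj2] by metis
    qed
  qed
  have surj: "h ` (verts G1 \<union> verts G2) = verts H1 \<union> verts H2"
  proof
    show "h ` (verts G1 \<union> verts G2) \<subseteq> verts H1 \<union> verts H2" using hin by blast
  next
    show "verts H1 \<union> verts H2 \<subseteq> h ` (verts G1 \<union> verts G2)"
    proof
      fix z assume "z \<in> verts H1 \<union> verts H2"
      then show "z \<in> h ` (verts G1 \<union> verts G2)"
      proof
        assume "z \<in> verts H1"
        then obtain x where "x \<in> verts G1" "z = f1 x" using im1 by blast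
        then show ?thesis using hV1 by (metis UnI1 image_eqI)
      next
        assume "z \<in> verts H2"
        then obtain x where "x \<in> verts G2" "z = f2 x" using im2 by blast
        then show ?thesis using hV2 by (metis UnI2 image_eqI)
      qed
    qed
  qed
  have edges: "{x, y} \<in> edges G1 \<union> edges G2 \<longleftrightarrow> {h x, h y} \<in> edges H1 \<union> edges H2"
    if x: "x \<in> verts G1 \<union> verts G2" and y: "y \<in> verts G1 \<union> verts G2" for x y
  proof
    assume "{x, y} \<in> edges G1 \<union> edges G2"
    then show "{h x, h y} \<in> edges H1 \<union> edges H2"
    proof
      assume E: "{x, y} \<in> edges G1"
      then have "x \<in> verts G1" "y \<in> verts G1" using edge_verts[OF g1] by blast+
      then show ?thesis using E e1 hV1 by simp
    next
      assume E: "{x, y} \<in> edges G2"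
      then have "x \<in> verts G2" "y \<in> verts G2" using edge_verts[OF g2] by blast+
      then show ?thesis using E e2 hV2 by simp
    qed
  next
    assume "{h x, h y} \<in> edges H1 \<union> edges H2"
    then show "{x, y} \<in> edges G1 \<union> edges G2"
    proof
      assume E: "{h x, h y} \<in> edges H1"
      then have "h x \<in> verts H1" "h y \<in> verts H1" using edge_verts[OF h1] by blast+
      then have "x \<in> verts G1" "y \<in> verts G1" using hin1 x y by blast+
      then show ?thesis using E e1 hV1 by simp
    next
      assume E: "{h x, h y} \<in> edges H2"
      then have "h x \<in> verts H2" "h y \<in> verts H2" using edge_verts[OF h2] by blast+
      then have "x \<in> verts G2" "y \<in> verts G2" using hin2 x y by blast+
      then show ?thesis using E e2 hV2 by simp
    qed
  qed
  have labs: "(if h x \<in> verts H1 then lab H1 (h x) else lab H2 (h x)) =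
      (if x \<in> verts G1 then lab G1 x else lab G2 x)" if x: "x \<in> verts G1 \<union> verts G2" for x
  proof (cases "x \<in> verts G1")
    case True then show ?thesis using hin1[OF x] hV1 l1 by simp
  next
    case False then have "x \<in> verts G2" using x by blast
    then show ?thesis using False hin1[OF x] hV2 l2 by simp
  qed
  have lft: "h ` lft G1 = lft H1"
  proof -
    have "h ` lft G1 = f1 ` lft G1" using hV1 igD(3)[OF g1] by (intro image_cong) auto
    then show ?thesis using lr1(1) by simp
  qed
  have rgt: "h ` rgt G2 = rgt H2"
  proof -
    have "h ` rgt G2 = f2 ` rgt G2" using hV2 igD(4)[OF g2] by (intro image_cong) auto
    then show ?thesis using lr2(2) by simp
  qed
  show ?thesis unfolding h_def[symmetric] isov_def glue_sel
  proof (intro conjI ballI)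
    show "bij_betw h (verts G1 \<union> verts G2) (verts H1 \<union> verts H2)"
      unfolding bij_betw_def using inj surj by blast
  qed (use edges labs lft rgt in auto)
qed

lemma compat_exists:
  fixes G1 G2 :: "nat igraph"
  assumes g1: "is_igraph k G1" and g2: "is_igraph k G2"
  shows "\<exists>G2'. is_igraph k G2' \<and> iso_igraph G2 G2' \<and> compatible G1 G2'"
proof -
  define N where "N = Suc (Max (insert 0 (verts G1)))"
  have big: "y < N" if "y \<in> verts G1" for y
  proof -
    have "finite (insert 0 (verts G1))" using igD(1)[OF g1] by simp
    then have "y \<le> Max (insert 0 (verts G1))" using that by simp
    then show ?thesis unfolding N_def by simp
  qed
  define P where "P x \<longleftrightarrow> x \<in> lft G2 \<and> lab G2 x \<in> lab G1 ` rgt G1" for x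
  define f where "f x = (if P x then (THE y. y \<in> rgt G1 \<and> lab G1 y = lab G2 x) else x + N)" for x
  have fP: "f x \<in> rgt G1 \<and> lab G1 (f x) = lab G2 x" if px: "P x" for x
  proof -
    have ex: "\<exists>!y. y \<in> rgt G1 \<and> lab G1 y = lab G2 x"
    proof -
      obtain y where y: "y \<in> rgt G1" "lab G1 y = lab G2 x" using px unfolding P_def by force
      have "\<And>z. z \<in> rgt G1 \<and> lab G1 z = lab G2 x \<Longrightarrow> z = y"
        using y inj_onD[OF igD(6)[OF g1]] by metis
      then show ?thesis using y by blast
    qed
    have "f x = (THE y. y \<in> rgt G1 \<and> lab G1 y = lab G2 x)" unfolding f_def using px by simp
    then show ?thesis using theI'[OF ex] by simp
  qed
  have fN: "f x \<notin> verts G1" if "\<not> P x" for x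
  proof -
    have "f x = x + N" unfolding f_def using that by simp
    then show ?thesis using big by fastforce
  qed
  have R1V: "rgt G1 \<subseteq> verts G1" using igD(4)[OF g1] .
  have inj: "inj_on f (verts G2)"
  proof (rule inj_onI)
    fix x y assume x: "x \<in> verts G2" and y: "y \<in> verts G2" and e: "f x = f y"
    show "x = y"
    proof (cases "P x")
      case True
      show ?thesis
      proof (cases "P y")
        case True
        have "lab G2 x = lab G2 y" using fP[OF \<open>P x\<close>] fP[OF True] e by simp
        moreover have "x \<in> lft G2" "y \<in> lft G2" using \<open>P x\<close> True unfolding P_def by blast+
        ultimately show ?thesis using inj_onD[OF igD(5)[OF g2]] by blast
      next
        case False
        then show ?thesis using fP[OF \<open>P x\<close>] fN[OF False] e R1V by auto
      qed
    next
      case False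
      show ?thesis
      proof (cases "P y")
        case True
        then show ?thesis using fP[OF True] fN[OF False] e R1V by auto
      next
        case False
        then show ?thesis using \<open>\<not> P x\<close> e unfolding f_def by simp
      qed
    qed
  qed
  define G2' where "G2' = \<lparr>verts = f ` verts G2, edges = (\<lambda>e. f ` e) ` edges G2,
     lab = (\<lambda>y. lab G2 (inv_into (verts G2) f y)), lft = f ` lft G2, rgt = f ` rgt G2\<rparr>"
  have s: "verts G2' = f ` verts G2" "edges G2' = (\<lambda>e. f ` e) ` edges G2"
    "lab G2' = (\<lambda>y. lab G2 (inv_into (verts G2) f y))" "lft G2' = f ` lft G2" "rgt G2' = f ` rgt G2"
    unfolding G2'_def by simp_all
  have lf: "lab G2' (f x) = lab G2 x" if "x \<in> verts G2" for x
    unfolding s using inv_into_f_f[OF inj that] by simp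
  have L2V: "lft G2 \<subseteq> verts G2" "rgt G2 \<subseteq> verts G2" using igD(3,4)[OF g2] by blast+
  have iso: "isov f G2 G2'" unfolding isov_def
  proof (intro conjI ballI)
    show "bij_betw f (verts G2) (verts G2')" unfolding s bij_betw_def using inj by blast
  next
    fix x y assume x: "x \<in> verts G2" and y: "y \<in> verts G2"
    show "({x, y} \<in> edges G2) = ({f x, f y} \<in> edges G2')"
    proof
      assume "{x, y} \<in> edges G2"
      then have "f ` {x, y} \<in> (\<lambda>e. f ` e) ` edges G2" by (rule imageI)
      then show "{f x, f y} \<in> edges G2'" unfolding s by simp
    next
      assume "{f x, f y} \<in> edges G2'"
      then obtain e where e: "e \<in> edges G2" "{f x, f y} = f ` e" unfolding s by blast
      obtain a b where ab: "e = {a, b}" "a \<in> verts G2" "b \<in> verts G2" using edge_form[OF g2 e(1)] by blast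
      have "f ` {x, y} = f ` e" using e(2) by simp
      then have "{x, y} = e" using inj_on_image_eq_iff[OF inj] x y ab by (metis empty_subsetI insert_subset)
      then show "{x, y} \<in> edges G2" using e(1) by simp
    qed
  next
    fix x assume "x \<in> verts G2" then show "lab G2' (f x) = lab G2 x" by (rule lf)
  qed (simp_all add: s)
  have ig: "is_igraph k G2'" unfolding is_igraph_def
  proof (intro conjI ballI)
    show "finite (verts G2')" unfolding s using igD(1)[OF g2] by simp
  next
    fix e' assume "e' \<in> edges G2'"
    then obtain e where e: "e \<in> edges G2" "e' = f ` e" unfolding s by blast
    obtain a b where ab: "a \<noteq> b" "e = {a, b}" "a \<in> verts G2" "b \<in> verts G2" using edge_form[OF g2 e(1)] by blast
    have "f a \<noteq> f b" using inj ab by (meson inj_onD)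
    then show "\<exists>x y. x \<noteq> y \<and> e' = {x, y} \<and> x \<in> verts G2' \<and> y \<in> verts G2'"
      using e ab unfolding s by auto
  next
    have "lab G2' ` verts G2' = lab G2 ` verts G2" unfolding s(1) image_image using lf by (intro image_cong) auto
    then show "lab G2' ` verts G2' \<subseteq> {1..k}" using igD(2)[OF g2] by simp
  next
    show "lft G2' \<subseteq> verts G2'" "rgt G2' \<subseteq> verts G2'" unfolding s using L2V by blast+
  next
    show "inj_on (lab G2') (lft G2')" unfolding s(4)
    proof (rule inj_onI)
      fix u v assume "u \<in> f ` lft G2" "v \<in> f ` lft G2" "lab G2' u = lab G2' v"
      then obtain x y where "x \<in> lft G2" "y \<in> lft G2" "u = f x" "v = f y" "lab G2' (f x) = lab G2' (f y)" by blast
      then show "u = v" using lf L2V inj_onD[OF igD(5)[OF g2]] by (metis subsetD)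
    qed
    show "inj_on (lab G2') (rgt G2')" unfolding s(5)
    proof (rule inj_onI)
      fix u v assume "u \<in> f ` rgt G2" "v \<in> f ` rgt G2" "lab G2' u = lab G2' v"
      then obtain x y where "x \<in> rgt G2" "y \<in> rgt G2" "u = f x" "v = f y" "lab G2' (f x) = lab G2' (f y)" by blast
      then show "u = v" using lf L2V inj_onD[OF igD(6)[OF g2]] by (metis subsetD)
    qed
  qed
  define J where "J = lab G1 ` rgt G1 \<inter> lab G2 ` lft G2"
  have LL: "lab G2' ` lft G2' = lab G2 ` lft G2" unfolding s(4) image_image using lf L2V by (intro image_cong) auto
  have JJ: "lab G1 ` rgt G1 \<inter> lab G2' ` lft G2' = J" unfolding LL J_def ..
  have int: "verts G1 \<inter> verts G2' = f ` {x \<in> verts G2. P x}"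
  proof
    show "verts G1 \<inter> verts G2' \<subseteq> f ` {x \<in> verts G2. P x}"
    proof
      fix y assume "y \<in> verts G1 \<inter> verts G2'"
      then obtain x where "x \<in> verts G2" "y = f x" "y \<in> verts G1" unfolding s by blast
      then show "y \<in> f ` {x \<in> verts G2. P x}" using fN by blast
    qed
    show "f ` {x \<in> verts G2. P x} \<subseteq> verts G1 \<inter> verts G2'" unfolding s using fP R1V by blast
  qed
  have int1: "f ` {x \<in> verts G2. P x} = {y \<in> rgt G1. lab G1 y \<in> J}"
  proof
    show "f ` {x \<in> verts G2. P x} \<subseteq> {y \<in> rgt G1. lab G1 y \<in> J}"
    proof
      fix y assume "y \<in> f ` {x \<in> verts G2. P x}"
      then obtain x where x: "x \<in> verts G2" "P x" "y = f x" by blast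
      then have "y \<in> rgt G1" "lab G1 y = lab G2 x" using fP by blast+
      moreover have "lab G2 x \<in> lab G2 ` lft G2" using x(2) unfolding P_def by blast
      ultimately show "y \<in> {y \<in> rgt G1. lab G1 y \<in> J}" unfolding J_def by (metis (mono_tags, lifting) IntI image_eqI mem_Collect_eq)
    qed
  next
    show "{y \<in> rgt G1. lab G1 y \<in> J} \<subseteq> f ` {x \<in> verts G2. P x}"
    proof
      fix y assume y: "y \<in> {y \<in> rgt G1. lab G1 y \<in> J}"
      then obtain x where x: "x \<in> lft G2" "lab G1 y = lab G2 x" unfolding J_def by auto
      have "lab G2 x \<in> lab G1 ` rgt G1" using x y by (metis (mono_tags, lifting) image_eqI mem_Collect_eq)
      then have px: "P x" unfolding P_def using x by blast
      have "f x = y" using fP[OF px] x y inj_onD[OF igD(6)[OF g1]] by fastforce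
      then show "y \<in> f ` {x \<in> verts G2. P x}" using px x L2V by blast
    qed
  qed
  have int2: "f ` {x \<in> verts G2. P x} = {y \<in> lft G2'. lab G2' y \<in> J}"
  proof
    show "f ` {x \<in> verts G2. P x} \<subseteq> {y \<in> lft G2'. lab G2' y \<in> J}"
    proof
      fix y assume "y \<in> f ` {x \<in> verts G2. P x}"
      then obtain x where x: "x \<in> verts G2" "P x" "y = f x" by blast
      then show "y \<in> {y \<in> lft G2'. lab G2' y \<in> J}" using lf[OF x(1)] unfolding s J_def P_def by auto
    qed
  next
    show "{y \<in> lft G2'. lab G2' y \<in> J} \<subseteq> f ` {x \<in> verts G2. P x}"
    proof
      fix y assume "y \<in> {y \<in> lft G2'. lab G2' y \<in> J}"
      then obtain x where x: "x \<in> lft G2" "y = f x" "lab G2' (f x) \<in> J" unfolding s by blast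
      then have "lab G2 x \<in> J" using lf L2V by auto
      then have "P x" unfolding P_def J_def using x by blast
      then show "y \<in> f ` {x \<in> verts G2. P x}" using x L2V by blast
    qed
  qed
  have labs: "\<forall>y\<in>verts G1 \<inter> verts G2'. lab G1 y = lab G2' y"
  proof
    fix y assume "y \<in> verts G1 \<inter> verts G2'"
    then obtain x where x: "x \<in> verts G2" "P x" "y = f x" unfolding int by blast
    then show "lab G1 y = lab G2' y" using fP lf by simp
  qed
  have c1: "verts G1 \<inter> verts G2' = {x\<in>rgt G1. lab G1 x \<in> J}" using int int1 by (rule trans)
  have c2: "verts G1 \<inter> verts G2' = {x\<in>lft G2'. lab G2' x \<in> J}" using int int2 by (rule trans)
  have comp: "compatible G1 G2'" unfolding compatible_def Let_def JJ
    by (intro conjI c1 c2 labs)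
  have iso': "iso_igraph G2 G2'" by (rule iso_isov[THEN iffD2, OF exI, OF iso])
  show ?thesis by (intro exI[of _ G2'] conjI ig iso' comp)
qed

lemma oplus_glue:
  assumes g1: "is_igraph k G1" and g2: "is_igraph k G2" and c: "compatible G1 G2"
  shows "oplus k (iclass k G1) (iclass k G2) = iclass k (glue G1 G2)"
  unfolding oplus_def
proof (rule the_equality)
  show "\<exists>H1\<in>iclass k G1. \<exists>H2\<in>iclass k G2. compatible H1 H2 \<and> iclass k (glue G1 G2) = iclass k (glue H1 H2)"
    using iclass_self[OF g1] iclass_self[OF g2] c by blast
next
  fix I assume "\<exists>H1\<in>iclass k G1. \<exists>H2\<in>iclass k G2. compatible H1 H2 \<and> I = iclass k (glue H1 H2)"
  then obtain H1 H2 where H: "H1 \<in> iclass k G1" "H2 \<in> iclass k G2" "compatible H1 H2" "I = iclass k (glue H1 H2)"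
    by blast
  have h1: "is_igraph k H1" "iso_igraph G1 H1" using iclass_mem[OF H(1)] by blast+
  have h2: "is_igraph k H2" "iso_igraph G2 H2" using iclass_mem[OF H(2)] by blast+
  obtain f1 where f1: "isov f1 G1 H1" using h1(2) iso_isov by blast
  obtain f2 where f2: "isov f2 G2 H2" using h2(2) iso_isov by blast
  have "isov (\<lambda>x. if x \<in> verts G1 then f1 x else f2 x) (glue G1 G2) (glue H1 H2)"
    by (rule glue_iso[OF g1 g2 h1(1) h2(1) c H(3) f1 f2])
  then have "iso_igraph (glue G1 G2) (glue H1 H2)" using iso_isov by blast
  then show "I = iclass k (glue G1 G2)" using iclass_eq[OF is_igraph_glue[OF g1 g2 c]] H(4) by simp
qed

lemma Ik_iff: "I \<in> Ik k \<longleftrightarrow> (\<exists>G. is_igraph k G \<and> I = iclass k G)"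
  unfolding Ik_def by blast

lemma oplus_gen:
  assumes g1: "is_igraph k G1" and g2: "is_igraph k G2"
  shows "\<exists>G2'. is_igraph k G2' \<and> compatible G1 G2' \<and> iclass k G2 = iclass k G2' \<and>
     oplus k (iclass k G1) (iclass k G2) = iclass k (glue G1 G2')"
proof -
  obtain G2' where G: "is_igraph k G2'" "iso_igraph G2 G2'" "compatible G1 G2'"
    using compat_exists[OF g1 g2] by blast
  have e: "iclass k G2 = iclass k G2'" using iclass_eq[OF g2 G(2)] .
  show ?thesis using G e oplus_glue[OF g1 G(1) G(3)] by metis
qed

lemma oplus_Ik: "I \<in> Ik k \<Longrightarrow> J \<in> Ik k \<Longrightarrow> oplus k I J \<in> Ik k"
proof -
  assume "I \<in> Ik k" "J \<in> Ik k"
  then obtain G1 G2 where g: "is_igraph k G1" "I = iclass k G1" "is_igraph k G2" "J = iclass k G2"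
    unfolding Ik_iff by blast
  obtain G2' where G: "is_igraph k G2'" "compatible G1 G2'" "oplus k I J = iclass k (glue G1 G2')"
    using oplus_gen[OF g(1) g(3)] g by blast
  show ?thesis unfolding Ik_iff using G is_igraph_glue[OF g(1) G(1) G(2)] by blast
qed

lemma abstr_Ik: "I \<in> Ik k \<Longrightarrow> abstr k I \<in> Ik k"
proof -
  assume "I \<in> Ik k"
  then obtain G where g: "is_igraph k G" "I = iclass k G" unfolding Ik_iff by blast
  show ?thesis unfolding Ik_iff using abstr_iclass[OF g(1)] is_igraph_abstr[OF g(1)] g(2) by blast
qed

lemma abstr_sel[simp]:
  "verts (abstr_graph G) = lft G \<union> rgt G"
  "edges (abstr_graph G) = torso_edges G (lft G \<union> rgt G)"
  "lab (abstr_graph G) = lab G"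
  "lft (abstr_graph G) = lft G"
  "rgt (abstr_graph G) = rgt G"
  by (simp_all add: abstr_graph_def)

context
  fixes k :: nat and G1 G2 :: "'v igraph"
  assumes g1: "is_igraph k G1" and g2: "is_igraph k G2" and c: "compatible G1 G2"
begin

lemma HV2: "x \<in> verts G1 - (lft G1 \<union> rgt G1) \<Longrightarrow> x \<notin> verts G2"
  using compat_sub[OF c] by blast

lemma NV1: "x \<in> lft G1 \<union> rgt G1 \<union> verts G2 \<Longrightarrow> x \<in> verts G1 \<Longrightarrow> x \<in> lft G1 \<union> rgt G1"
  using compat_sub[OF c] by blast

lemma LRV1: "lft G1 \<union> rgt G1 \<subseteq> verts G1"
  using igD(3,4)[OF g1] by blast

lemma tedge: "a \<in> lft G1 \<union> rgt G1 \<Longrightarrow> b \<in> lft G1 \<union> rgt G1 \<Longrightarrow> a \<noteq> b \<Longrightarrow> wk G1 a b S \<Longrightarrow>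
    S \<inter> (lft G1 \<union> rgt G1) \<subseteq> {a, b} \<Longrightarrow> {a, b} \<in> edges (glue (abstr_graph G1) G2)"
proof -
  assume h: "a \<in> lft G1 \<union> rgt G1" "b \<in> lft G1 \<union> rgt G1" "a \<noteq> b" "wk G1 a b S"
    "S \<inter> (lft G1 \<union> rgt G1) \<subseteq> {a, b}"
  have "{a, b} \<in> torso_edges G1 (lft G1 \<union> rgt G1)" unfolding torso_iff using h by blast
  then show ?thesis by simp
qed

lemma walkA:
  "wk (glue G1 G2) a c S \<Longrightarrow> c \<in> lft G1 \<union> rgt G1 \<union> verts G2 \<Longrightarrow>
    (a \<in> lft G1 \<union> rgt G1 \<union> verts G2 \<and> (\<exists>S2. wk (glue (abstr_graph G1) G2) a c S2 \<and> S2 \<subseteq> S)) \<or>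
    (a \<in> verts G1 - (lft G1 \<union> rgt G1) \<and> (\<exists>d S1 S2. wk G1 a d S1 \<and> S1 - {d} \<subseteq> verts G1 - (lft G1 \<union> rgt G1) \<and>
        d \<in> lft G1 \<union> rgt G1 \<union> verts G2 \<and> wk (glue (abstr_graph G1) G2) d c S2 \<and> S1 \<union> S2 \<subseteq> S))"
proof (induction rule: wk.induct)
  case (wk0 a)
  have "wk (glue (abstr_graph G1) G2) a a {a}" by (rule wk.wk0) (use wk0 in simp)
  then show ?case using wk0 by blast
next
  case (wkS a b c S)
  let ?H = "verts G1 - (lft G1 \<union> rgt G1)"
  let ?N = "lft G1 \<union> rgt G1 \<union> verts G2"
  let ?GA = "glue (abstr_graph G1) G2"
  have bS: "b \<in> S" using wk_props[OF wkS.hyps(3)] by blast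
  have aV: "a \<in> verts G1 \<union> verts G2" using wkS.hyps(2) by simp
  have E: "{a, b} \<in> edges G1 \<or> {a, b} \<in> edges G2" using wkS.hyps(1) by simp
  have IH: "(b \<in> ?N \<and> (\<exists>S2. wk ?GA b c S2 \<and> S2 \<subseteq> S)) \<or>
    (b \<in> ?H \<and> (\<exists>d S1 S2. wk G1 b d S1 \<and> S1 - {d} \<subseteq> ?H \<and> d \<in> ?N \<and> wk ?GA d c S2 \<and> S1 \<union> S2 \<subseteq> S))"
    using wkS.IH wkS.prems by blast
  show ?case
  proof (cases "a \<in> ?H")
    case aH: True
    have "{a, b} \<notin> edges G2" using edge_verts[OF g2] HV2[OF aH] by blast
    then have E1: "{a, b} \<in> edges G1" using E by blast
    have aV1: "a \<in> verts G1" "b \<in> verts G1" using edge_verts[OF g1 E1] by blast+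
    from IH show ?thesis
    proof
      assume "b \<in> ?N \<and> (\<exists>S2. wk ?GA b c S2 \<and> S2 \<subseteq> S)"
      then obtain S2 where S2: "b \<in> ?N" "wk ?GA b c S2" "S2 \<subseteq> S" by blast
      have w: "wk G1 a b (insert a {b})" by (rule wk.wkS[OF E1 aV1(1) wk.wk0[OF aV1(2)]])
      have "insert a {b} - {b} \<subseteq> ?H" using aH by blast
      moreover have "insert a {b} \<union> S2 \<subseteq> insert a S" using S2 bS by blast
      ultimately show ?thesis using aH w S2 by blast
    next
      assume "b \<in> ?H \<and> (\<exists>d S1 S2. wk G1 b d S1 \<and> S1 - {d} \<subseteq> ?H \<and> d \<in> ?N \<and> wk ?GA d c S2 \<and> S1 \<union> S2 \<subseteq> S)"
      then obtain d S1 S2 where D: "wk G1 b d S1" "S1 - {d} \<subseteq> ?H" "d \<in> ?N" "wk ?GA d c S2" "S1 \<union> S2 \<subseteq> S"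
        by blast
      have w: "wk G1 a d (insert a S1)" by (rule wk.wkS[OF E1 aV1(1) D(1)])
      have "insert a S1 - {d} \<subseteq> ?H" using aH D(2) by blast
      moreover have "insert a S1 \<union> S2 \<subseteq> insert a S" using D(5) by blast
      ultimately show ?thesis using aH w D by blast
    qed
  next
    case aN: False
    then have aN': "a \<in> ?N" using aV by blast
    have aGA: "a \<in> verts ?GA" using aN' by simp
    from IH show ?thesis
    proof
      assume "b \<in> ?N \<and> (\<exists>S2. wk ?GA b c S2 \<and> S2 \<subseteq> S)"
      then obtain S2 where S2: "b \<in> ?N" "wk ?GA b c S2" "S2 \<subseteq> S" by blast
      have eGA: "{a, b} \<in> edges ?GA"
        using E
      proof
        assume "{a, b} \<in> edges G2" then show ?thesis by simp
      next
        assume E1: "{a, b} \<in> edges G1"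
        have v: "a \<in> verts G1" "b \<in> verts G1" "a \<noteq> b" using edge_verts[OF g1 E1] by blast+
        have lr: "a \<in> lft G1 \<union> rgt G1" "b \<in> lft G1 \<union> rgt G1" using NV1 aN' S2(1) v by blast+
        have w: "wk G1 a b (insert a {b})" by (rule wk.wkS[OF E1 v(1) wk.wk0[OF v(2)]])
        show ?thesis by (rule tedge[OF lr v(3) w]) blast
      qed
      have "wk ?GA a c (insert a S2)" by (rule wk.wkS[OF eGA aGA S2(2)])
      moreover have "insert a S2 \<subseteq> insert a S" using S2 by blast
      ultimately show ?thesis using aN' by blast
    next
      assume bH: "b \<in> ?H \<and> (\<exists>d S1 S2. wk G1 b d S1 \<and> S1 - {d} \<subseteq> ?H \<and> d \<in> ?N \<and> wk ?GA d c S2 \<and> S1 \<union> S2 \<subseteq> S)"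
      then obtain d S1 S2 where D: "wk G1 b d S1" "S1 - {d} \<subseteq> ?H" "d \<in> ?N" "wk ?GA d c S2" "S1 \<union> S2 \<subseteq> S"
        by blast
      have "{a, b} \<notin> edges G2" using edge_verts[OF g2] HV2 bH by blast
      then have E1: "{a, b} \<in> edges G1" using E by blast
      have aV1: "a \<in> verts G1" using edge_verts[OF g1 E1] by blast
      have w: "wk G1 a d (insert a S1)" by (rule wk.wkS[OF E1 aV1 D(1)])
      show ?thesis
      proof (cases "a = d")
        case True
        then show ?thesis using D aN' by blast
      next
        case False
        have dV1: "d \<in> verts G1" using wk_props[OF D(1)] by blast
        have lr: "a \<in> lft G1 \<union> rgt G1" "d \<in> lft G1 \<union> rgt G1" using NV1 aN' D(3) aV1 dV1 by blast+
        have "insert a S1 \<inter> (lft G1 \<union> rgt G1) \<subseteq> {a, d}" using D(2) by blast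
        then have eGA: "{a, d} \<in> edges ?GA" by (rule tedge[OF lr False w])
        have "wk ?GA a c (insert a S2)" by (rule wk.wkS[OF eGA aGA D(4)])
        moreover have "insert a S2 \<subseteq> insert a S" using D(5) by blast
        ultimately show ?thesis using aN' by blast
      qed
    qed
  qed
qed

lemma walkB:
  "wk (glue (abstr_graph G1) G2) a c S \<Longrightarrow> \<exists>T. wk (glue G1 G2) a c T \<and> T \<subseteq> S \<union> (verts G1 - (lft G1 \<union> rgt G1))"
proof (induction rule: wk.induct)
  case (wk0 a)
  then have "a \<in> verts (glue G1 G2)" using LRV1 by auto
  then have "wk (glue G1 G2) a a {a}" by (rule wk.wk0)
  then show ?case by blast
next
  case (wkS a b c S)
  obtain T where T: "wk (glue G1 G2) b c T" "T \<subseteq> S \<union> (verts G1 - (lft G1 \<union> rgt G1))"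
    using wkS.IH by blast
  have bS: "b \<in> S" using wk_props[OF wkS.hyps(3)] by blast
  have aV: "a \<in> verts (glue G1 G2)" using wkS.hyps(2) LRV1 by auto
  have "{a, b} \<in> torso_edges G1 (lft G1 \<union> rgt G1) \<or> {a, b} \<in> edges G2" using wkS.hyps(1) by simp
  then show ?case
  proof
    assume "{a, b} \<in> edges G2"
    then have "{a, b} \<in> edges (glue G1 G2)" by simp
    have w: "wk (glue G1 G2) a c (insert a T)" by (rule wk.wkS[OF \<open>{a, b} \<in> edges (glue G1 G2)\<close> aV T(1)])
    have "insert a T \<subseteq> insert a S \<union> (verts G1 - (lft G1 \<union> rgt G1))" using T(2) by blast
    then show ?thesis using w by blast
  next
    assume "{a, b} \<in> torso_edges G1 (lft G1 \<union> rgt G1)"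
    then have "\<exists>P. wk G1 a b P \<and> P \<inter> (lft G1 \<union> rgt G1) \<subseteq> {a, b}" unfolding torso_iff by (elim conjE)
    then obtain P where P: "wk G1 a b P" "P \<inter> (lft G1 \<union> rgt G1) \<subseteq> {a, b}" by blast
    have "P \<subseteq> verts G1" using wk_props[OF P(1)] by blast
    then have Psub: "P \<subseteq> {a, b} \<union> (verts G1 - (lft G1 \<union> rgt G1))" using P(2) by blast
    have "wk (glue G1 G2) a b P" by (rule wk_mono[OF P(1)]) simp_all
    from wk_app[OF this T(1)] have w: "wk (glue G1 G2) a c (P \<union> T)" .
    have "P \<union> T \<subseteq> insert a S \<union> (verts G1 - (lft G1 \<union> rgt G1))" using Psub T(2) bS by blast
    then show ?thesis using w by blast
  qed
qed

lemma torso_glue_eq: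
  "torso_edges (glue G1 G2) (lft G1 \<union> rgt G2) = torso_edges (glue (abstr_graph G1) G2) (lft G1 \<union> rgt G2)"
proof -
  let ?X = "lft G1 \<union> rgt G2"
  let ?H = "verts G1 - (lft G1 \<union> rgt G1)"
  let ?N = "lft G1 \<union> rgt G1 \<union> verts G2"
  have XN: "?X \<subseteq> ?N" using igD(4)[OF g2] by blast
  have XH: "?X \<inter> ?H = {}" using HV2 igD(4)[OF g2] by blast
  have iff: "{x, y} \<in> torso_edges (glue G1 G2) ?X \<longleftrightarrow> {x, y} \<in> torso_edges (glue (abstr_graph G1) G2) ?X" for x y
  proof
    assume "{x, y} \<in> torso_edges (glue G1 G2) ?X"
    then have h: "x \<in> ?X" "y \<in> ?X" "x \<noteq> y" and "\<exists>S. wk (glue G1 G2) x y S \<and> S \<inter> ?X \<subseteq> {x, y}"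
      unfolding torso_iff by blast+
    then obtain S where S: "wk (glue G1 G2) x y S" "S \<inter> ?X \<subseteq> {x, y}" by blast
    have "x \<in> ?N" "y \<in> ?N" "x \<notin> ?H" using h XN XH by blast+
    then obtain S2 where "wk (glue (abstr_graph G1) G2) x y S2" "S2 \<subseteq> S" using walkA[OF S(1)] by blast
    then show "{x, y} \<in> torso_edges (glue (abstr_graph G1) G2) ?X" unfolding torso_iff using h S(2) by blast
  next
    assume "{x, y} \<in> torso_edges (glue (abstr_graph G1) G2) ?X"
    then have h: "x \<in> ?X" "y \<in> ?X" "x \<noteq> y" and "\<exists>S. wk (glue (abstr_graph G1) G2) x y S \<and> S \<inter> ?X \<subseteq> {x, y}"
      unfolding torso_iff by blast+
    then obtain S where S: "wk (glue (abstr_graph G1) G2) x y S" "S \<inter> ?X \<subseteq> {x, y}" by blast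
    obtain T where T: "wk (glue G1 G2) x y T" "T \<subseteq> S \<union> ?H" using walkB[OF S(1)] by blast
    have "T \<inter> ?X \<subseteq> {x, y}" using T(2) S(2) XH by blast
    then show "{x, y} \<in> torso_edges (glue G1 G2) ?X" unfolding torso_iff using h T(1) by blast
  qed
  show ?thesis
  proof (rule set_eqI)
    fix e
    show "e \<in> torso_edges (glue G1 G2) ?X \<longleftrightarrow> e \<in> torso_edges (glue (abstr_graph G1) G2) ?X"
    proof
      assume "e \<in> torso_edges (glue G1 G2) ?X"
      then obtain x y where "e = {x, y}" unfolding torso_edges_def by blast
      then show "e \<in> torso_edges (glue (abstr_graph G1) G2) ?X" using iff \<open>e \<in> torso_edges (glue G1 G2) ?X\<close> by blast
    next
      assume "e \<in> torso_edges (glue (abstr_graph G1) G2) ?X"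
      then obtain x y where "e = {x, y}" unfolding torso_edges_def by blast
      then show "e \<in> torso_edges (glue G1 G2) ?X" using iff \<open>e \<in> torso_edges (glue (abstr_graph G1) G2) ?X\<close> by blast
    qed
  qed
qed

lemma abstr_glue_iso: "isov id (abstr_graph (glue G1 G2)) (abstr_graph (glue (abstr_graph G1) G2))"
  unfolding isov_def
proof (intro conjI ballI)
  show "bij_betw id (verts (abstr_graph (glue G1 G2))) (verts (abstr_graph (glue (abstr_graph G1) G2)))"
    by simp
next
  fix x y
  show "({x, y} \<in> edges (abstr_graph (glue G1 G2))) = ({id x, id y} \<in> edges (abstr_graph (glue (abstr_graph G1) G2)))"
    using torso_glue_eq by simp
next
  fix x assume x: "x \<in> verts (abstr_graph (glue G1 G2))"
  then have x': "x \<in> lft G1 \<union> rgt G2" by simp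
  show "lab (abstr_graph (glue (abstr_graph G1) G2)) (id x) = lab (abstr_graph (glue G1 G2)) x"
  proof (cases "x \<in> lft G1")
    case True
    then show ?thesis using LRV1 by auto
  next
    case False
    then have xr: "x \<in> rgt G2" using x' by blast
    show ?thesis
    proof (cases "x \<in> verts G1")
      case True
      then have "x \<in> rgt G1" using xr igD(4)[OF g2] compat_sub[OF c] by blast
      then show ?thesis using True by simp
    next
      case False
      then have "x \<notin> lft G1 \<union> rgt G1" using LRV1 by blast
      then show ?thesis using False by simp
    qed
  qed
qed simp_all

lemma compat_abstr: "compatible (abstr_graph G1) G2"
proof -
  have "(lft G1 \<union> rgt G1) \<inter> verts G2 = verts G1 \<inter> verts G2" using LRV1 compat_sub[OF c] by blast
  note eq = this
  show ?thesis unfolding compatible_def Let_def abstr_sel eq using c unfolding compatible_def Let_def .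
qed

end

lemma key:
  assumes I: "I \<in> Ik k" and J: "J \<in> Ik k"
  shows "abstr k (oplus k (abstr k I) J) = abstr k (oplus k I J)"
proof -
  obtain G1 where G1: "is_igraph k G1" "I = iclass k G1" using I unfolding Ik_iff by blast
  obtain G2 where G2: "is_igraph k G2" "J = iclass k G2" using J unfolding Ik_iff by blast
  obtain G2' where G: "is_igraph k G2'" "compatible G1 G2'" "iclass k G2 = iclass k G2'"
     "oplus k (iclass k G1) (iclass k G2) = iclass k (glue G1 G2')"
    using oplus_gen[OF G1(1) G2(1)] by blast
  have a1: "is_igraph k (abstr_graph G1)" using is_igraph_abstr[OF G1(1)] .
  have ca: "compatible (abstr_graph G1) G2'" using compat_abstr[OF G1(1) G(1) G(2)] .
  have o1: "oplus k (abstr k I) J = iclass k (glue (abstr_graph G1) G2')"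
    unfolding G1(2) G2(2) abstr_iclass[OF G1(1)] G(3) using oplus_glue[OF a1 G(1) ca] .
  have gl1: "is_igraph k (glue G1 G2')" using is_igraph_glue[OF G1(1) G(1) G(2)] .
  have gl2: "is_igraph k (glue (abstr_graph G1) G2')" using is_igraph_glue[OF a1 G(1) ca] .
  have "abstr k (oplus k (abstr k I) J) = iclass k (abstr_graph (glue (abstr_graph G1) G2'))"
    unfolding o1 abstr_iclass[OF gl2] ..
  also have "\<dots> = iclass k (abstr_graph (glue G1 G2'))"
  proof -
    have "iso_igraph (abstr_graph (glue G1 G2')) (abstr_graph (glue (abstr_graph G1) G2'))"
      using abstr_glue_iso[OF G1(1) G(1) G(2)] iso_isov by blast
    then show ?thesis using iclass_eq[OF is_igraph_abstr[OF gl1]] by simp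
  qed
  also have "\<dots> = abstr k (oplus k I J)"
    unfolding G1(2) G2(2) G(4) abstr_iclass[OF gl1] ..
  finally show ?thesis .
qed

lemma torso_all: assumes T: "is_igraph k T" shows "torso_edges T (verts T) = edges T"
proof (rule set_eqI, rule iffI)
  fix e assume "e \<in> torso_edges T (verts T)"
  then obtain x1 x2 ps where e: "e = {x1, x2}" "x1 \<noteq> x2"
    "is_path T ps" "hd ps = x1" "last ps = x2" "set (butlast (tl ps)) \<inter> verts T = {}"
    unfolding torso_edges_def by blast
  have sp: "set ps \<subseteq> verts T" using e(3) unfolding is_path_def by blast
  have "set (butlast (tl ps)) \<subseteq> set ps" by (cases ps) (auto dest: in_set_butlastD)
  then have sub: "set (butlast (tl ps)) \<subseteq> verts T" using sp by (rule subset_trans)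
  have "set (butlast (tl ps)) = set (butlast (tl ps)) \<inter> verts T" using sub by (rule Int_absorb2[symmetric])
  then have "set (butlast (tl ps)) = {}" using e(6) by simp
  then have bt: "butlast (tl ps) = []" by simp
  obtain a rest where ar: "ps = a # rest" using e(3) unfolding is_path_def by (cases ps) auto
  have "rest \<noteq> []" using ar e by auto
  then obtain b where "rest = [b]" using bt ar by (cases rest) (auto split: if_splits)
  then have ps: "ps = [x1, x2]" using ar e by simp
  have "{ps ! 0, ps ! Suc 0} \<in> edges T" using e(3) ps unfolding is_path_def by simp
  then show "e \<in> edges T" using ps e(1) by simp
next
  fix e assume "e \<in> edges T"
  then obtain x y where xy: "x \<noteq> y" "e = {x, y}" "x \<in> verts T" "y \<in> verts T"
    using edge_form[OF T] by blast
  have w: "wk T x y (insert x {y})" by (rule wk.wkS) (use xy \<open>e \<in> edges T\<close> in \<open>auto intro: wk.wk0\<close>)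
  have "{x, y} \<in> torso_edges T (verts T)" unfolding torso_iff using xy w by blast
  then show "e \<in> torso_edges T (verts T)" using xy by simp
qed

lemma abstr_idem_graph: assumes "is_igraph k G" shows "abstr_graph (abstr_graph G) = abstr_graph G"
proof -
  have "torso_edges (abstr_graph G) (verts (abstr_graph G)) = edges (abstr_graph G)"
    by (rule torso_all[OF is_igraph_abstr[OF assms]])
  then have t: "torso_edges (abstr_graph G) (lft G \<union> rgt G) = torso_edges G (lft G \<union> rgt G)" by simp
  show ?thesis unfolding abstr_graph_def[of "abstr_graph G"] abstr_sel t by (simp add: abstr_graph_def)
qed

lemma Ak_idem: assumes "A \<in> Ak k" shows "abstr k A = A"
proof -
  obtain I where I: "I \<in> Ik k" "A = abstr k I" using assms unfolding Ak_def by blast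
  obtain G where G: "is_igraph k G" "I = iclass k G" using I(1) unfolding Ik_iff by blast
  have A: "A = iclass k (abstr_graph G)" using I(2) G abstr_iclass by blast
  show ?thesis unfolding A abstr_iclass[OF is_igraph_abstr[OF G(1)]] abstr_idem_graph[OF G(1)] ..
qed

lemma Ak_Ik: "A \<in> Ak k \<Longrightarrow> A \<in> Ik k"
  unfolding Ak_def using abstr_Ik by blast

lemma fold_Ik: "a \<in> Ik k \<Longrightarrow> set xs \<subseteq> Ik k \<Longrightarrow> foldl (oplus k) a xs \<in> Ik k"
proof (induction xs arbitrary: a)
  case Nil then show ?case by simp
next
  case (Cons x xs)
  then show ?case using oplus_Ik by simp
qed

lemma fold_main: "a \<in> Ik k \<Longrightarrow> set xs \<subseteq> Ik k \<Longrightarrow> xs \<noteq> [] \<Longrightarrow>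
   abstr k (foldl (oplus k) a xs) = foldl (boxplus k) a xs"
proof (induction xs rule: rev_induct)
  case Nil then show ?case by simp
next
  case (snoc x xs)
  show ?case
  proof (cases "xs = []")
    case True
    then show ?thesis by (simp add: boxplus_def)
  next
    case False
    have IH: "abstr k (foldl (oplus k) a xs) = foldl (boxplus k) a xs" using snoc False by simp
    have F: "foldl (oplus k) a xs \<in> Ik k" using fold_Ik snoc.prems by simp
    have x: "x \<in> Ik k" using snoc.prems by simp
    have "foldl (boxplus k) a (xs @ [x]) = abstr k (oplus k (foldl (boxplus k) a xs) x)"
      by (simp add: boxplus_def)
    also have "\<dots> = abstr k (oplus k (abstr k (foldl (oplus k) a xs)) x)" unfolding IH ..
    also have "\<dots> = abstr k (oplus k (foldl (oplus k) a xs) x)" using key[OF F x] .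
    finally show ?thesis by simp
  qed
qed

theorem lemma3p4:
  fixes k :: nat and w :: "nat igraph set list"
  assumes "k > 0"
    and "w \<noteq> []"
    and "set w \<subseteq> Ak k"
  shows "abstr k (foldl (oplus k) (hd w) (tl w)) = foldl (boxplus k) (hd w) (tl w)"
proof -
  obtain a xs where w: "w = a # xs" using assms(2) by (cases w) auto
  have a: "a \<in> Ak k" using assms(3) w by simp
  have xs: "set xs \<subseteq> Ik k" using assms(3) w Ak_Ik by auto
  show ?thesis
  proof (cases "xs = []")
    case True
    then show ?thesis using w Ak_idem[OF a] by simp
  next
    case False
    then show ?thesis using w fold_main[OF Ak_Ik[OF a] xs False] by simp
  qed
qed

end
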